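(* Let $\mathfrak{g}$ be a finite-dimensional supersolvable Lie algebra over a field $\mathbb{F}$, and let $M$ be a finite-dimensional irreducible Leibniz $\mathfrak{g}$-bimodule such that $\dim_{\mathbb{F}}M\ne 1$. Then $\mathrm{HL}^n(\mathfrak{g},M)=0$ for every positive integer $n$. Moreover, if $M$ is symmetric, then $\mathrm{HL}^n(\mathfrak{g},M)=0$ for every non-negative integer $n$.
   Context: A Lie algebra $\mathfrak{g}$ is supersolvable if there is a chain of ideals $0=\mathfrak{g}_0\subset\mathfrak{g}_1\subset\cdots\subset\mathfrak{g}_n=\mathfrak{g}$ with $\dim\mathfrak{g}_j/\mathfrak{g}_{j-1}=1$. $\mathfrak{g}$ is regarded as a left Leibniz algebra with $xy=[x,y]$. A Leibniz $\mathfrak{g}$-bimodule is a vector space $M$ with bilinear actions $x\cdot m$, $m\cdot x$ satisfying $(xy)\cdot m=x\cdot(y\cdot m)-y\cdot(x\cdot m)$, $(x\cdot m)\cdot y=x\cdot(m\cdot y)-m\cdot(xy)$, $(m\cdot x)\cdot y=m\cdot(xy)-x\cdot(m\cdot y)$; it is irreducible if nonzero with no sub-bimodules other than $0$ and $M$; symmetric if $m\cdot x=-x\cdot m$. $\mathrm{HL}^n(\mathfrak{g},M)$ is the cohomology of $\mathrm{Hom}(\mathfrak{g}^{\otimes n},M)$ with $(\mathrm{d}^nf)(x_1,\dots,x_{n+1})=\sum_{i=1}^n(-1)^{i+1}x_i\cdot f(\dots,\hat{x}_i,\dots)+(-1)^{n+1}f(x_1,\dots,x_n)\cdot x_{n+1}+\sum_{i<j}(-1)^if(x_1,\dots,\hat{x}_i,\dots,x_ix_j,\dots,x_{n+1})$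 ($x_ix_j$ in the $j$-th position). *)

theory Defs
  imports Main "HOL.Vector_Spaces"
begin

(* Vector spaces over a field 'k are modelled as whole types ('g, 'm) with a
   scalar multiplication satisfying the vector_space locale axioms. *)

definition fin_dim :: "('k::field \<Rightarrow> 'v::ab_group_add \<Rightarrow> 'v) \<Rightarrow> bool" where
  "fin_dim s \<longleftrightarrow> (\<exists>B. finite B \<and> module.span s B = UNIV)"

definition bilinear_map ::
  "('k::field \<Rightarrow> 'a::ab_group_add \<Rightarrow> 'a) \<Rightarrow> ('k \<Rightarrow> 'b::ab_group_add \<Rightarrow> 'b)
   \<Rightarrow> ('k \<Rightarrow> 'c::ab_group_add \<Rightarrow> 'c) \<Rightarrow> ('a \<Rightarrow> 'b \<Rightarrow> 'c) \<Rightarrow> bool" where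
  "bilinear_map sa sb sc h \<longleftrightarrow>
     (\<forall>y. Vector_Spaces.linear sa sc (\<lambda>x. h x y)) \<and> (\<forall>x. Vector_Spaces.linear sb sc (\<lambda>y. h x y))"

definition lie_algebra :: "('k::field \<Rightarrow> 'g::ab_group_add \<Rightarrow> 'g) \<Rightarrow> ('g \<Rightarrow> 'g \<Rightarrow> 'g) \<Rightarrow> bool" where
  "lie_algebra s br \<longleftrightarrow> vector_space s \<and> bilinear_map s s s br \<and>
     (\<forall>x. br x x = 0) \<and>
     (\<forall>x y z. br x (br y z) + br y (br z x) + br z (br x y) = 0)"

definition lie_ideal :: "('k::field \<Rightarrow> 'g::ab_group_add \<Rightarrow> 'g) \<Rightarrow> ('g \<Rightarrow> 'g \<Rightarrow> 'g) \<Rightarrow> 'g set \<Rightarrow> bool" where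
  "lie_ideal s br I \<longleftrightarrow> module.subspace s I \<and> (\<forall>x y. y \<in> I \<longrightarrow> br x y \<in> I)"

(* supersolvable: chain of ideals 0 = g_0 \<subseteq> ... \<subseteq> g_n = g with dim g_j / g_{j-1} = 1,
   i.e. (finite dimension) dim g_j = dim g_{j-1} + 1 *)
definition supersolvable :: "('k::field \<Rightarrow> 'g::ab_group_add \<Rightarrow> 'g) \<Rightarrow> ('g \<Rightarrow> 'g \<Rightarrow> 'g) \<Rightarrow> bool" where
  "supersolvable s br \<longleftrightarrow> (\<exists>(n::nat) (c::nat \<Rightarrow> 'g set).
      c 0 = {0} \<and> c n = UNIV \<and> (\<forall>j\<le>n. lie_ideal s br (c j)) \<and>
      (\<forall>j<n. c j \<subseteq> c (Suc j) \<and> vector_space.dim s (c (Suc j)) = vector_space.dim s (c j) + 1))"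

definition leibniz_bimodule ::
  "('k::field \<Rightarrow> 'g::ab_group_add \<Rightarrow> 'g) \<Rightarrow> ('g \<Rightarrow> 'g \<Rightarrow> 'g) \<Rightarrow>
   ('k \<Rightarrow> 'm::ab_group_add \<Rightarrow> 'm) \<Rightarrow> ('g \<Rightarrow> 'm \<Rightarrow> 'm) \<Rightarrow> ('m \<Rightarrow> 'g \<Rightarrow> 'm) \<Rightarrow> bool" where
  "leibniz_bimodule sg br sm la ra \<longleftrightarrow> vector_space sm \<and>
     bilinear_map sg sm sm la \<and> bilinear_map sm sg sm ra \<and>
     (\<forall>x y m. la (br x y) m = la x (la y m) - la y (la x m)) \<and>
     (\<forall>x y m. ra (la x m) y = la x (ra m y) - ra m (br x y)) \<and>
     (\<forall>x y m. ra (ra m x) y = ra m (br x y) - la x (ra m y))"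

definition sub_bimodule ::
  "('k::field \<Rightarrow> 'm::ab_group_add \<Rightarrow> 'm) \<Rightarrow> ('g \<Rightarrow> 'm \<Rightarrow> 'm) \<Rightarrow> ('m \<Rightarrow> 'g \<Rightarrow> 'm) \<Rightarrow> 'm set \<Rightarrow> bool" where
  "sub_bimodule sm la ra N \<longleftrightarrow> module.subspace sm N \<and>
     (\<forall>x m. m \<in> N \<longrightarrow> la x m \<in> N \<and> ra m x \<in> N)"

definition irreducible_bimodule ::
  "('k::field \<Rightarrow> 'm::ab_group_add \<Rightarrow> 'm) \<Rightarrow> ('g \<Rightarrow> 'm \<Rightarrow> 'm) \<Rightarrow> ('m \<Rightarrow> 'g \<Rightarrow> 'm) \<Rightarrow> bool" where
  "irreducible_bimodule sm la ra \<longleftrightarrow> (UNIV :: 'm set) \<noteq> {0} \<and>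
     (\<forall>N. sub_bimodule sm la ra N \<longrightarrow> N = {0} \<or> N = UNIV)"

definition symmetric_bimodule :: "('g \<Rightarrow> 'm::ab_group_add \<Rightarrow> 'm) \<Rightarrow> ('m \<Rightarrow> 'g \<Rightarrow> 'm) \<Rightarrow> bool" where
  "symmetric_bimodule la ra \<longleftrightarrow> (\<forall>x m. ra m x = - la x m)"

(* n-cochains: Hom(g^{\<otimes>n}, M) identified with n-multilinear maps g^n \<rightarrow> M,
   represented as functions on lists, required to vanish on lists of length \<noteq> n *)
definition cochain ::
  "('k::field \<Rightarrow> 'g::ab_group_add \<Rightarrow> 'g) \<Rightarrow> ('k \<Rightarrow> 'm::ab_group_add \<Rightarrow> 'm) \<Rightarrow> nat \<Rightarrow> ('g list \<Rightarrow> 'm) \<Rightarrow> bool" where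
  "cochain sg sm n f \<longleftrightarrow>
     (\<forall>xs. length xs \<noteq> n \<longrightarrow> f xs = 0) \<and>
     (\<forall>xs k. length xs = n \<longrightarrow> k < n \<longrightarrow> Vector_Spaces.linear sg sm (\<lambda>y. f (xs[k := y])))"

definition omit :: "nat \<Rightarrow> 'a list \<Rightarrow> 'a list" where
  "omit k xs = take k xs @ drop (Suc k) xs"

(* Leibniz coboundary d^n, with 0-based list indices: position k corresponds to x_{k+1} *)
definition leibniz_d ::
  "('k::field \<Rightarrow> 'm::ab_group_add \<Rightarrow> 'm) \<Rightarrow> ('g \<Rightarrow> 'g \<Rightarrow> 'g) \<Rightarrow>
   ('g \<Rightarrow> 'm \<Rightarrow> 'm) \<Rightarrow> ('m \<Rightarrow> 'g \<Rightarrow> 'm) \<Rightarrow> nat \<Rightarrow> ('g list \<Rightarrow> 'm) \<Rightarrow> 'g list \<Rightarrow> 'm" where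
  "leibniz_d sm br la ra n f xs =
     (if length xs = Suc n then
        (\<Sum>k<n. sm ((-1) ^ (k + 2)) (la (xs ! k) (f (omit k xs))))
        + sm ((-1) ^ (n + 1)) (ra (f (take n xs)) (xs ! n))
        + (\<Sum>l\<le>n. \<Sum>k<l. sm ((-1) ^ (k + 1)) (f (omit k (xs[l := br (xs ! k) (xs ! l)]))))
      else 0)"

definition HL_vanishes ::
  "('k::field \<Rightarrow> 'g::ab_group_add \<Rightarrow> 'g) \<Rightarrow> ('g \<Rightarrow> 'g \<Rightarrow> 'g) \<Rightarrow>
   ('k \<Rightarrow> 'm::ab_group_add \<Rightarrow> 'm) \<Rightarrow> ('g \<Rightarrow> 'm \<Rightarrow> 'm) \<Rightarrow> ('m \<Rightarrow> 'g \<Rightarrow> 'm) \<Rightarrow> nat \<Rightarrow> bool" where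
  "HL_vanishes sg br sm la ra n \<longleftrightarrow>
     (\<forall>f. cochain sg sm n f \<and> leibniz_d sm br la ra n f = (\<lambda>_. 0) \<longrightarrow>
        (if n = 0 then f = (\<lambda>_. 0)
         else (\<exists>h. cochain sg sm (n - 1) h \<and> leibniz_d sm br la ra (n - 1) h = f)))"

end

theory Submission
  imports Defs
begin


locale LB =
  fixes sg :: "'k::field \<Rightarrow> 'g::ab_group_add \<Rightarrow> 'g" and br :: "'g \<Rightarrow> 'g \<Rightarrow> 'g"
    and sm :: "'k \<Rightarrow> 'm::ab_group_add \<Rightarrow> 'm" and la :: "'g \<Rightarrow> 'm \<Rightarrow> 'm" and ra :: "'m \<Rightarrow> 'g \<Rightarrow> 'm"
  assumes VG: "vector_space sg" and VM: "vector_space sm"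
  and br_add1: "br (x + y) z = br x z + br y z"
  and br_sc1: "br (sg c x) z = sg c (br x z)"
  and br_add2: "br x (y + z) = br x y + br x z"
  and br_sc2: "br x (sg c y) = sg c (br x y)"
  and br_alt: "br x x = 0"
  and jacobi: "br x (br y z) + br y (br z x) + br z (br x y) = 0"
  and la_add1: "la (x + y) v = la x v + la y v"
  and la_sc1: "la (sg c x) v = sm c (la x v)"
  and la_add2: "la x (v + w) = la x v + la x w"
  and la_sc2: "la x (sm c v) = sm c (la x v)"
  and ra_add1: "ra (v + w) x = ra v x + ra w x"
  and ra_sc1: "ra (sm c v) x = sm c (ra v x)"
  and ra_add2: "ra v (x + y) = ra v x + ra v y"
  and ra_sc2: "ra v (sg c x) = sm c (ra v x)"
  and ax1: "la (br x y) v = la x (la y v) - la y (la x v)"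
  and ax2: "ra (la x v) y = la x (ra v y) - ra v (br x y)"
  and ax3: "ra (ra v x) y = ra v (br x y) - la x (ra v y)"
begin

sublocale G: vector_space sg by (rule VG)
sublocale M: vector_space sm by (rule VM)

abbreviation D where "D \<equiv> leibniz_d sm br la ra"
definition th :: "'g \<Rightarrow> ('g list \<Rightarrow> 'm) \<Rightarrow> 'g list \<Rightarrow> 'm" where
  "th x f xs = la x (f xs) - (\<Sum>l<length xs. f (xs[l := br x (xs!l)]))"
definition io :: "'g \<Rightarrow> ('g list \<Rightarrow> 'm) \<Rightarrow> 'g list \<Rightarrow> 'm" where
  "io x f xs = f (x # xs)"

lemma la_0[simp]: "la x 0 = 0" using la_add2[of x 0 0] by simp
lemma la_0'[simp]: "la 0 v = 0" using la_add1[of 0 0 v] by simp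
lemma ra_0[simp]: "ra 0 x = 0" using ra_add1[of 0 0 x] by simp
lemma ra_0'[simp]: "ra v 0 = 0" using ra_add2[of v 0 0] by simp
lemma br_0[simp]: "br x 0 = 0" "br 0 x = 0" using br_add2[of x 0 0] br_add1[of 0 0 x] by simp_all
lemma la_neg2: "la x (- v) = - la x v"
proof -
  have "la x (- v) + la x v = 0" using la_add2[of x "- v" v] by simp
  then show ?thesis by (simp add: eq_neg_iff_add_eq_0)
qed
lemma la_diff2: "la x (v - w) = la x v - la x w" using la_add2[of x v "- w"] la_neg2[of x w] by simp
lemma ra_neg1: "ra (- v) x = - ra v x"
proof -
  have "ra (- v) x + ra v x = 0" using ra_add1[of "- v" v x] by simp
  then show ?thesis by (simp add: eq_neg_iff_add_eq_0)
qed
lemma ra_diff1: "ra (v - w) x = ra v x - ra w x" using ra_add1[of v "- w" x] ra_neg1[of w x] by simp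
lemma la_sum2: "la x (sum f A) = (\<Sum>a\<in>A. la x (f a))"
proof (induction A rule: infinite_finite_induct)
  case (insert a A)
  then show ?case by (simp add: la_add2)
qed simp_all

lemma omit_0[simp]: "omit 0 (x#xs) = xs" by (simp add: omit_def)
lemma omit_Suc[simp]: "omit (Suc k) (x#xs) = x # omit k xs" by (simp add: omit_def)
lemma length_omit[simp]: "length (omit k xs) = (if k < length xs then length xs - 1 else length xs)"
  by (simp add: omit_def)

lemma sgn_Suc: "sm ((-1) ^ Suc j) v = - sm ((-1) ^ j) v" by simp

lemma cartan:
  assumes "length xs = Suc m"
  shows "D (Suc m) f (x#xs) = th x f xs - D m (io x f) xs"
  using assms
  apply (simp add: leibniz_d_def th_def io_def sum.lessThan_Suc_shift sum.atMost_Suc_shift del: sum.lessThan_Suc sum.atMost_Suc)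
  apply (simp add: sum_subtractf sum_negf flip: lessThan_Suc_atMost)
  apply (insert sum.lessThan_Suc[of "\<lambda>i. f (xs[i := br x (xs ! i)])" m] sum.lessThan_Suc_shift[of "\<lambda>i. f (xs[i := br x (xs ! i)])" m])
  apply (simp add: algebra_simps)
  done

lemma D_cong:
  assumes "\<And>zs. length zs = m \<Longrightarrow> F zs = G zs"
  shows "D m F xs = D m G xs"
  using assms by (simp add: leibniz_d_def)

lemma D_add: "D m (\<lambda>zs. F zs + G zs) xs = D m F xs + D m G xs"
proof (cases "length xs = Suc m")
  case True
  show ?thesis unfolding leibniz_d_def
    apply (simp only: if_P[OF True] la_add2 ra_add1 M.scale_right_distrib sum.distrib)
    by (simp add: algebra_simps)
qed (simp add: leibniz_d_def)

lemma D_scale: "D m (\<lambda>zs. sm c (F zs)) xs = sm c (D m F xs)"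
proof (cases "length xs = Suc m")
  case True
  show ?thesis unfolding leibniz_d_def
    apply (simp only: if_P[OF True] la_sc2 ra_sc1 M.scale_right_distrib M.scale_sum_right M.scale_left_commute[of c])
    done
qed (simp add: leibniz_d_def)

lemma D_neg: "D m (\<lambda>zs. - F zs) xs = - D m F xs"
  using D_scale[of m "-1" F xs] by simp

lemma D_diff: "D m (\<lambda>zs. F zs - G zs) xs = D m F xs - D m G xs"
  using D_add[of m F "\<lambda>zs. - G zs" xs] D_neg[of m G xs] by simp

lemma D_zero: "D m (\<lambda>zs. 0) xs = 0"
  by (simp add: leibniz_d_def)

lemma th_cong:
  assumes "\<And>zs. length zs = length xs \<Longrightarrow> F zs = G zs"
  shows "th x F xs = th x G xs"
  using assms by (simp add: th_def)

lemma th_diff: "th x (\<lambda>zs. F zs - G zs) xs = th x F xs - th x G xs"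
  by (simp add: th_def la_diff2 sum_subtractf algebra_simps)

lemma th_zero: "th x (\<lambda>zs. 0) xs = 0"
  by (simp add: th_def)

lemma th_Cons: "th x F (y # zs) = th x (io y F) zs - io (br x y) F zs"
  by (simp add: th_def io_def sum.lessThan_Suc_shift del: sum.lessThan_Suc)

definition ml :: "nat \<Rightarrow> ('g list \<Rightarrow> 'm) \<Rightarrow> bool" where
  "ml n f \<longleftrightarrow> (\<forall>xs. length xs \<noteq> n \<longrightarrow> f xs = 0) \<and>
     (\<forall>xs k y z. length xs = n \<longrightarrow> k < n \<longrightarrow> f (xs[k := y + z]) = f (xs[k := y]) + f (xs[k := z])) \<and>
     (\<forall>xs k c y. length xs = n \<longrightarrow> k < n \<longrightarrow> f (xs[k := sg c y]) = sm c (f (xs[k := y])))"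

lemma mlD:
  assumes "ml n f"
  shows "length xs \<noteq> n \<Longrightarrow> f xs = 0"
    and "length xs = n \<Longrightarrow> k < n \<Longrightarrow> f (xs[k := y + z]) = f (xs[k := y]) + f (xs[k := z])"
    and "length xs = n \<Longrightarrow> k < n \<Longrightarrow> f (xs[k := sg c y]) = sm c (f (xs[k := y]))"
  using assms unfolding ml_def by blast+

lemma ml_neg:
  assumes "ml n f" "length xs = n" "k < n"
  shows "f (xs[k := - y]) = - f (xs[k := y])"
  using mlD(3)[OF assms, of "-1" y] by simp

lemma ml_diff:
  assumes "ml n f" "length xs = n" "k < n"
  shows "f (xs[k := y - z]) = f (xs[k := y]) - f (xs[k := z])"
  using mlD(2)[OF assms, of y "- z"] ml_neg[OF assms, of z] by simp

lemma ml_0: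
  assumes "ml n f" "length xs = n" "k < n"
  shows "f (xs[k := 0]) = 0"
  using mlD(3)[OF assms, of 0 0] by simp

lemma br_anti: "br x y = - br y x"
proof -
  have "br x y + br y x = 0"
    using br_alt[of "x+y"] unfolding br_add1 br_add2 by (simp add: br_alt add.commute)
  then show ?thesis by (simp add: eq_neg_iff_add_eq_0)
qed

lemma br_neg2: "br x (- y) = - br x y"
proof -
  have "br x (- y) + br x y = 0" using br_add2[of x "- y" y] by simp
  then show ?thesis by (simp add: eq_neg_iff_add_eq_0)
qed

lemma jac2: "br y (br x a) - br x (br y a) = - br (br x y) a"
proof -
  have "br x (br y a) + br y (br a x) + br a (br x y) = 0" by (rule jacobi)
  moreover have "br y (br a x) = - br y (br x a)" using br_anti[of a x] br_neg2[of y "br x a"] by simp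
  moreover have "br a (br x y) = - br (br x y) a" by (rule br_anti)
  ultimately show ?thesis by (simp add: algebra_simps)
qed

lemma split_sum_at:
  assumes "l < (n::nat)"
  shows "(\<Sum>p<n. F p) = F l + (\<Sum>p<n. if p = l then 0 else F p)"
proof -
  have "(\<Sum>p<n. F p) = (\<Sum>p<n. if p = l then F p else 0) + (\<Sum>p<n. if p = l then 0 else F p)"
    by (subst sum.distrib[symmetric]) (rule sum.cong, auto)
  moreover have "(\<Sum>p<n. if p = l then F p else 0) = F l"
    using assms by simp
  ultimately show ?thesis by simp
qed

lemma rep:
  assumes h: "ml n h" and len: "length xs = n"
  shows "th x (th y h) xs - th y (th x h) xs = th (br x y) h xs"
proof -
  have Q: "(\<Sum>l<n. \<Sum>p<n. h ((xs[l := br u (xs!l)])[p := br v (xs[l := br u (xs!l)] ! p)]))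
     = (\<Sum>l<n. h (xs[l := br v (br u (xs!l))])) +
       (\<Sum>l<n. \<Sum>p<n. if p = l then 0 else h ((xs[l := br u (xs!l)])[p := br v (xs!p)]))" for u v
  proof -
    have "(\<Sum>p<n. h ((xs[l := br u (xs!l)])[p := br v (xs[l := br u (xs!l)] ! p)]))
      = h (xs[l := br v (br u (xs!l))]) + (\<Sum>p<n. if p = l then 0 else h ((xs[l := br u (xs!l)])[p := br v (xs!p)]))"
      if "l < n" for l
      apply (subst split_sum_at[OF that])
      using that len by (auto intro!: sum.cong)
    then show ?thesis by (simp add: sum.distrib)
  qed
  have R: "(\<Sum>l<n. \<Sum>p<n. if p = l then 0 else h ((xs[l := br x (xs!l)])[p := br y (xs!p)]))
     = (\<Sum>l<n. \<Sum>p<n. if p = l then 0 else h ((xs[l := br y (xs!l)])[p := br x (xs!p)]))"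
    by (subst sum.swap) (auto intro!: sum.cong simp: list_update_swap)
  have J: "h (xs[l := br y (br x (xs!l))]) - h (xs[l := br x (br y (xs!l))]) = - h (xs[l := br (br x y) (xs!l)])"
    if "l < n" for l
    using ml_diff[OF h len that, of "br y (br x (xs!l))" "br x (br y (xs!l))"]
      ml_neg[OF h len that, of "br (br x y) (xs!l)"] jac2[of y x "xs!l"] by simp
  have J2: "(\<Sum>l<n. h (xs[l := br y (br x (xs!l))])) - (\<Sum>l<n. h (xs[l := br x (br y (xs!l))]))
      = - (\<Sum>l<n. h (xs[l := br (br x y) (xs!l)]))"
    using J by (simp add: sum_subtractf[symmetric] sum_negf[symmetric])
  show ?thesis
    unfolding th_def using len
    apply (simp add: la_diff2 la_sum2 sum_subtractf ax1)
    apply (simp only: Q)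
    using R J2 by (simp add: algebra_simps)
qed


lemma D0: "D 0 h [y] = - ra (h []) y"
  by (simp add: leibniz_d_def)

lemma ml_io: "ml (Suc m) h \<Longrightarrow> ml m (io x h)"
  unfolding ml_def io_def
  apply (intro conjI allI impI)
  subgoal by simp
  subgoal for xs k y z by (drule conjunct2, drule conjunct1, erule allE[of _ "x#xs"], auto)
  subgoal for xs k c y by (drule conjunct2, drule conjunct2, erule allE[of _ "x#xs"], auto)
  done

lemma ml_upd2:
  assumes h: "ml m h" and len: "length xs = m" and k: "k < m" and l: "l < m"
  shows "h ((xs[k := y + z])[l := br x ((xs[k := y + z]) ! l)]) =
         h ((xs[k := y])[l := br x ((xs[k := y]) ! l)]) + h ((xs[k := z])[l := br x ((xs[k := z]) ! l)])"
    and "h ((xs[k := sg c y])[l := br x ((xs[k := sg c y]) ! l)]) = sm c (h ((xs[k := y])[l := br x ((xs[k := y]) ! l)]))"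
proof -
  show "h ((xs[k := y + z])[l := br x ((xs[k := y + z]) ! l)]) =
         h ((xs[k := y])[l := br x ((xs[k := y]) ! l)]) + h ((xs[k := z])[l := br x ((xs[k := z]) ! l)])"
  proof (cases "l = k")
    case True then show ?thesis using len k mlD(2)[OF h len k] by (simp add: br_add2)
  next
    case False
    then have e: "(xs[k := v])[l := br x ((xs[k := v]) ! l)] = (xs[l := br x (xs ! l)])[k := v]" for v
      by (simp add: list_update_swap)
    show ?thesis unfolding e using mlD(2)[OF h _ k, of "xs[l := br x (xs ! l)]"] len by simp
  qed
  show "h ((xs[k := sg c y])[l := br x ((xs[k := sg c y]) ! l)]) = sm c (h ((xs[k := y])[l := br x ((xs[k := y]) ! l)]))"
  proof (cases "l = k")
    case True then show ?thesis using len k mlD(3)[OF h len k] by (simp add: br_sc2)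
  next
    case False
    then have e: "(xs[k := v])[l := br x ((xs[k := v]) ! l)] = (xs[l := br x (xs ! l)])[k := v]" for v
      by (simp add: list_update_swap)
    show ?thesis unfolding e using mlD(3)[OF h _ k, of "xs[l := br x (xs ! l)]"] len by simp
  qed
qed

lemma ml_th: "ml m h \<Longrightarrow> ml m (th x h)"
  apply (subst ml_def)
  apply (intro conjI allI impI)
  subgoal by (simp add: th_def mlD(1))
  subgoal for xs k y z
    using ml_upd2(1)[of m h xs k _ y z x] mlD(2)[of m h xs k y z]
    by (simp add: th_def la_add2 sum.distrib algebra_simps)
  subgoal for xs k c y
    using ml_upd2(2)[of m h xs k _ c y x] mlD(3)[of m h xs k c y]
    by (simp add: th_def la_sc2 M.scale_sum_right M.scale_right_diff_distrib)
  done

lemma ml_add: "ml m f \<Longrightarrow> ml m g \<Longrightarrow> ml m (\<lambda>xs. f xs + g xs)"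
  unfolding ml_def by (simp add: M.scale_right_distrib algebra_simps)
lemma ml_scale: "ml m f \<Longrightarrow> ml m (\<lambda>xs. sm c (f xs))"
  unfolding ml_def by (simp add: M.scale_right_distrib M.scale_left_commute[of c])
lemma ml_diff_fun: "ml m f \<Longrightarrow> ml m g \<Longrightarrow> ml m (\<lambda>xs. f xs - g xs)"
  unfolding ml_def by (simp add: M.scale_right_diff_distrib algebra_simps)
lemma ml_zero: "ml m (\<lambda>xs. 0)"
  unfolding ml_def by simp

lemma th_add1:
  assumes "ml m h" "length ys = m"
  shows "th (y + z) h ys = th y h ys + th z h ys"
proof -
  have "h (ys[l := br (y + z) (ys ! l)]) = h (ys[l := br y (ys ! l)]) + h (ys[l := br z (ys ! l)])" if "l < m" for l
    using mlD(2)[OF assms that] by (simp add: br_add1)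
  then show ?thesis using assms(2) by (simp add: th_def la_add1 sum.distrib algebra_simps)
qed

lemma th_sc1:
  assumes "ml m h" "length ys = m"
  shows "th (sg c y) h ys = sm c (th y h ys)"
proof -
  have "h (ys[l := br (sg c y) (ys ! l)]) = sm c (h (ys[l := br y (ys ! l)]))" if "l < m" for l
    using mlD(3)[OF assms that] by (simp add: br_sc1)
  then show ?thesis using assms(2) by (simp add: th_def la_sc1 M.scale_sum_right M.scale_right_diff_distrib)
qed

lemma ml_D: "ml m h \<Longrightarrow> ml (Suc m) (D m h)"
proof (induction m arbitrary: h)
  case 0
  show ?case
    apply (subst ml_def)
    apply (intro conjI allI impI)
    subgoal by (simp add: leibniz_d_def)
    subgoal for xs k y z by (cases xs) (auto simp: D0 ra_add2)
    subgoal for xs k c y by (cases xs) (auto simp: D0 ra_sc2)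
    done
next
  case (Suc m)
  note h = Suc.prems
  have IH: "ml (Suc m) (D m (io x h))" for x using Suc.IH[OF ml_io[OF h]] .
  have cart: "D (Suc m) h (x # ys) = th x h ys - D m (io x h) ys" if "length ys = Suc m" for x ys
    using cartan[OF that] .
  have ioadd: "D m (io (y + z) h) ys = D m (io y h) ys + D m (io z h) ys" for y z ys
  proof -
    have "D m (io (y + z) h) ys = D m (\<lambda>zs. io y h zs + io z h zs) ys"
      by (rule D_cong) (use mlD(2)[OF h, of "y # _" 0] in \<open>simp add: io_def\<close>)
    then show ?thesis by (simp add: D_add)
  qed
  have iosc: "D m (io (sg c y) h) ys = sm c (D m (io y h) ys)" for c y ys
  proof -
    have "D m (io (sg c y) h) ys = D m (\<lambda>zs. sm c (io y h zs)) ys"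
      by (rule D_cong) (use mlD(3)[OF h, of "y # _" 0] in \<open>simp add: io_def\<close>)
    then show ?thesis by (simp add: D_scale)
  qed
  show ?case
  proof (subst ml_def, intro conjI allI impI)
    fix xs :: "'g list" assume "length xs \<noteq> Suc (Suc m)"
    then show "D (Suc m) h xs = 0" by (simp add: leibniz_d_def)
  next
    fix xs :: "'g list" and k y z assume len: "length xs = Suc (Suc m)" and k: "k < Suc (Suc m)"
    then obtain x ys where xs: "xs = x # ys" and ys: "length ys = Suc m" by (cases xs) auto
    show "D (Suc m) h (xs[k := y + z]) = D (Suc m) h (xs[k := y]) + D (Suc m) h (xs[k := z])"
    proof (cases k)
      case 0
      then show ?thesis using ys by (simp add: xs cart th_add1[OF h ys] ioadd)
    next
      case (Suc k')
      have k': "k' < Suc m" using k Suc by simp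
      show ?thesis using ys k'
        by (simp add: xs Suc cart mlD(2)[OF ml_th[OF h] ys k'] mlD(2)[OF IH ys k'])
    qed
  next
    fix xs :: "'g list" and k c y assume len: "length xs = Suc (Suc m)" and k: "k < Suc (Suc m)"
    then obtain x ys where xs: "xs = x # ys" and ys: "length ys = Suc m" by (cases xs) auto
    show "D (Suc m) h (xs[k := sg c y]) = sm c (D (Suc m) h (xs[k := y]))"
    proof (cases k)
      case 0
      then show ?thesis using ys by (simp add: xs cart th_sc1[OF h ys] iosc M.scale_right_diff_distrib)
    next
      case (Suc k')
      have k': "k' < Suc m" using k Suc by simp
      show ?thesis using ys k'
        by (simp add: xs Suc cart mlD(3)[OF ml_th[OF h] ys k'] mlD(3)[OF IH ys k'] M.scale_right_diff_distrib)
    qed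
  qed
qed


lemma io_th: "io y (th x h) = (\<lambda>zs. th x (io y h) zs - io (br x y) h zs)"
  by (rule ext) (subst io_def, rule th_Cons)

lemma TD: "ml m h \<Longrightarrow> length xs = Suc m \<Longrightarrow> th x (D m h) xs = D m (th x h) xs"
proof (induction m arbitrary: h x xs)
  case 0
  then obtain y where xs: "xs = [y]" by (cases xs) auto
  show ?case
    by (simp add: xs th_def D0 ax2 la_neg2 ra_neg1)
next
  case (Suc m)
  note h = Suc.prems(1)
  obtain y ys where xs: "xs = y # ys" and ys: "length ys = Suc m" using Suc.prems(2) by (cases xs) auto
  have c1: "th x (io y (D (Suc m) h)) ys = th x (th y h) ys - D m (th x (io y h)) ys"
  proof -
    have "th x (io y (D (Suc m) h)) ys = th x (\<lambda>zs. th y h zs - D m (io y h) zs) ys"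
      by (rule th_cong) (simp add: io_def cartan ys)
    also have "\<dots> = th x (th y h) ys - th x (D m (io y h)) ys" by (rule th_diff)
    also have "th x (D m (io y h)) ys = D m (th x (io y h)) ys"
      by (rule Suc.IH[OF ml_io[OF h] ys])
    finally show ?thesis .
  qed
  have c2: "io (br x y) (D (Suc m) h) ys = th (br x y) h ys - D m (io (br x y) h) ys"
    by (simp add: io_def cartan ys)
  have c3: "D (Suc m) (th x h) (y # ys) = th y (th x h) ys - D m (th x (io y h)) ys + D m (io (br x y) h) ys"
    using cartan[OF ys, of "th x h" y] by (simp add: io_th D_diff)
  have r: "th x (th y h) ys - th y (th x h) ys = th (br x y) h ys"
    by (rule rep[OF h ys])
  show ?case
    unfolding xs th_Cons c1 c2 c3 using r by (simp add: algebra_simps)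
qed

lemma DD: "ml m h \<Longrightarrow> D (Suc m) (D m h) xs = 0"
proof (induction m arbitrary: h xs)
  case 0
  show ?case
  proof (cases "length xs = 2")
    case True
    then obtain x y where xs: "xs = [x, y]"
      by (metis (no_types, lifting) One_nat_def Suc_length_conv length_0_conv numeral_2_eq_2)
    have "D (Suc 0) (D 0 h) (x # [y]) = th x (D 0 h) [y] - D 0 (io x (D 0 h)) [y]"
      by (rule cartan) simp
    then show ?thesis
      by (simp add: xs th_def D0 io_def ax3 la_neg2 ra_neg1)
  next
    case False
    then show ?thesis by (simp add: leibniz_d_def)
  qed
next
  case (Suc m)
  note h = Suc.prems
  show ?case
  proof (cases "length xs = Suc (Suc (Suc m))")
    case True
    then obtain x ys where xs: "xs = x # ys" and ys: "length ys = Suc (Suc m)" by (cases xs) auto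
    have "D (Suc m) (io x (D (Suc m) h)) ys = D (Suc m) (\<lambda>zs. th x h zs - D m (io x h) zs) ys"
      by (rule D_cong) (simp add: io_def cartan)
    also have "\<dots> = D (Suc m) (th x h) ys"
      by (simp add: D_diff Suc.IH[OF ml_io[OF h]])
    finally have e: "D (Suc m) (io x (D (Suc m) h)) ys = D (Suc m) (th x h) ys" .
    show ?thesis
      unfolding xs cartan[OF ys] e using TD[OF h ys] by simp
  next
    case False
    then show ?thesis by (simp add: leibniz_d_def)
  qed
qed

end


lemma sum_list_lt:
  "length a = length b \<Longrightarrow> (\<forall>i<length a. a!i \<le> (b!i::nat)) \<Longrightarrow> a \<noteq> b \<Longrightarrow> sum_list a < sum_list b"
proof (induction a b rule: list_induct2)
  case Nil then show ?case by simp
next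
  case (Cons x xs y ys)
  have le: "\<forall>i<length xs. xs!i \<le> ys!i" using Cons.prems(1) by auto
  have xy: "x \<le> y" using Cons.prems(1) by auto
  have sle: "sum_list xs \<le> sum_list ys"
  proof (cases "xs = ys")
    case True then show ?thesis by simp
  next
    case False then show ?thesis using Cons.IH le by simp
  qed
  show ?case
  proof (cases "xs = ys")
    case True then have "x \<noteq> y" using Cons.prems(2) by simp
    then show ?thesis using True xy by simp
  next
    case False then show ?thesis using Cons.IH le xy by simp
  qed
qed

locale LB2 = LB sg br sm la ra
  for sg :: "'k::field \<Rightarrow> 'g::ab_group_add \<Rightarrow> 'g" and br :: "'g \<Rightarrow> 'g \<Rightarrow> 'g"
    and sm :: "'k \<Rightarrow> 'm::ab_group_add \<Rightarrow> 'm" and la :: "'g \<Rightarrow> 'm \<Rightarrow> 'm" and ra :: "'m \<Rightarrow> 'g \<Rightarrow> 'm" +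
  fixes N :: nat and c :: "nat \<Rightarrow> 'g set" and e :: "nat \<Rightarrow> 'g" and lam :: "nat \<Rightarrow> 'g \<Rightarrow> 'k"
  assumes c0: "c 0 = {0}" and cN: "c N = UNIV"
  and c_ideal: "j \<le> N \<Longrightarrow> y \<in> c j \<Longrightarrow> br x y \<in> c j"
  and c_mono: "j < N \<Longrightarrow> c j \<subseteq> c (Suc j)"
  and e_in: "j < N \<Longrightarrow> e j \<in> c (Suc j)"
  and c_decomp: "j < N \<Longrightarrow> v \<in> c (Suc j) \<Longrightarrow> \<exists>a. \<exists>w\<in>c j. v = sg a (e j) + w"
  and lam_prop: "j < N \<Longrightarrow> \<exists>w\<in>c j. br x (e j) = sg (lam j x) (e j) + w"
  and stable: "\<And>W. M.subspace W \<Longrightarrow> (\<forall>x. \<forall>v\<in>W. la x v \<in> W) \<Longrightarrow> W = {0} \<or> W = UNIV"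
  and dimM: "\<And>u. u \<noteq> 0 \<Longrightarrow> \<not> (\<forall>x. \<exists>a. la x u = sm a u)"
  and Mnz: "\<exists>u::'m. u \<noteq> 0"
begin

definition box :: "nat list \<Rightarrow> 'g list \<Rightarrow> bool" where
  "box T xs \<longleftrightarrow> length xs = length T \<and> (\<forall>i<length T. xs!i \<in> c (Suc (T!i)))"
definition van :: "nat list set \<Rightarrow> ('g list \<Rightarrow> 'm) \<Rightarrow> bool" where
  "van P g \<longleftrightarrow> (\<forall>T\<in>P. \<forall>xs. box T xs \<longrightarrow> g xs = 0)"
definition TT :: "nat \<Rightarrow> nat list set" where
  "TT n = {T. length T = n \<and> (\<forall>i<n. T!i < N)}"
definition dc :: "nat \<Rightarrow> nat list set \<Rightarrow> bool" where
  "dc n P \<longleftrightarrow> (\<forall>T\<in>P. \<forall>T'. length T' = n \<and> (\<forall>i<n. T'!i \<le> T!i) \<longrightarrow> T' \<in> P)"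

lemma finite_TT: "finite (TT n)"
proof -
  have "TT n \<subseteq> {xs. set xs \<subseteq> {..<N} \<and> length xs = n}"
    by (auto simp: TT_def in_set_conv_nth)
  moreover have "finite {xs. set xs \<subseteq> {..<N} \<and> length xs = n}"
    by (rule finite_lists_length_eq) simp
  ultimately show ?thesis by (rule finite_subset)
qed

lemma van_th:
  assumes "van P g" "P \<subseteq> TT n"
  shows "van P (th x g)"
  unfolding van_def
proof (intro ballI allI impI)
  fix T xs assume T: "T \<in> P" and b: "box T xs"
  have TN: "\<forall>i<length T. T!i < N" using T assms(2) by (auto simp: TT_def)
  have "box T (xs[l := br x (xs!l)])" if "l < length xs" for l
    using b that TN c_ideal[of "Suc (T!l)" "xs!l" x]
    by (auto simp: box_def nth_list_update)
  then have "g (xs[l := br x (xs!l)]) = 0" if "l < length xs" for l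
    using assms(1) T that by (auto simp: van_def)
  moreover have "g xs = 0" using assms(1) T b by (auto simp: van_def)
  ultimately show "th x g xs = 0" by (simp add: th_def)
qed

lemma lower:
  assumes dcP: "dc n P" and PT: "P \<subseteq> TT n" and T: "T \<in> P" and v: "van (P - {T}) G" and G: "ml n G"
    and len: "length xs = n" and bx: "\<forall>i<n. xs!i \<in> c (Suc (T!i))" and i: "i < n" and xi: "xs!i \<in> c (T!i)"
  shows "G xs = 0"
proof (cases "T!i = 0")
  case True
  then have "xs!i = 0" using xi c0 by simp
  then have "xs = xs[i := 0]" by (metis list_update_id)
  then show ?thesis using ml_0[OF G len i] by simp
next
  case False
  define T' where "T' = T[i := T!i - 1]"
  have lenT: "length T = n" using T PT by (auto simp: TT_def)
  have le: "\<forall>j<n. T'!j \<le> T!j" using i lenT by (auto simp: T'_def nth_list_update)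
  have "length T' = n" using lenT by (simp add: T'_def)
  then have "T' \<in> P" using dcP T le unfolding dc_def by blast
  moreover have "T' \<noteq> T" using False i lenT unfolding T'_def
    by (metis diff_less less_numeral_extra(1) bot_nat_0.not_eq_extremum nth_list_update_eq order_less_irrefl)
  moreover have "box T' xs" unfolding box_def
  proof (intro conjI allI impI)
    show "length xs = length T'" using len lenT by (simp add: T'_def)
    fix j assume "j < length T'"
    then have j: "j < n" using lenT by (simp add: T'_def)
    show "xs ! j \<in> c (Suc (T' ! j))"
    proof (cases "j = i")
      case True then show ?thesis using xi False i lenT by (simp add: T'_def)
    next
      case False then show ?thesis using bx j by (simp add: T'_def)
    qed
  qed
  ultimately show ?thesis using v by (auto simp: van_def)
qed


lemma rho:
  assumes TN: "T \<in> TT n" and G: "ml n G"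
    and low: "\<And>xs i. length xs = n \<Longrightarrow> \<forall>i<n. xs!i \<in> c (Suc (T!i)) \<Longrightarrow> i < n \<Longrightarrow> xs!i \<in> c (T!i) \<Longrightarrow> G xs = 0"
  shows "th x G (map e T) = la x (G (map e T)) - sm (\<Sum>i<n. lam (T!i) x) (G (map e T))"
proof -
  have lenT: "length T = n" and TlN: "\<And>i. i < n \<Longrightarrow> T!i < N" using TN by (auto simp: TT_def)
  have trm: "G ((map e T)[l := br x (e (T!l))]) = sm (lam (T!l) x) (G (map e T))" if l: "l < n" for l
  proof -
    obtain w where w: "w \<in> c (T!l)" and bw: "br x (e (T!l)) = sg (lam (T!l) x) (e (T!l)) + w"
      using lam_prop[OF TlN[OF l], of x] by blast
    have le: "length (map e T) = n" using lenT by simp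
    have "G ((map e T)[l := br x (e (T!l))]) = G ((map e T)[l := sg (lam (T!l) x) (e (T!l))]) + G ((map e T)[l := w])"
      using l lenT bw mlD(2)[OF G le l] by simp
    also have "G ((map e T)[l := sg (lam (T!l) x) (e (T!l))]) = sm (lam (T!l) x) (G ((map e T)[l := e (T!l)]))"
      using mlD(3)[OF G le l] by simp
    also have "(map e T)[l := e (T!l)] = map e T" using l lenT by (metis length_map list_update_id nth_map)
    also have "G ((map e T)[l := w]) = 0"
    proof (rule low)
      show "length ((map e T)[l := w]) = n" using lenT by simp
      show "\<forall>i<n. (map e T)[l := w] ! i \<in> c (Suc (T ! i))"
      proof (intro allI impI)
        fix i assume "i < n"
        then show "(map e T)[l := w] ! i \<in> c (Suc (T!i))"
          using lenT w c_mono[OF TlN[OF l]] e_in TlN by (cases "i = l") auto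
      qed
      show "l < n" by fact
      show "(map e T)[l := w] ! l \<in> c (T ! l)" using w l lenT by simp
    qed
    finally show ?thesis by simp
  qed
  show ?thesis
    using lenT trm by (simp add: th_def M.scale_sum_left)
qed

lemma expand:
  assumes TN: "T \<in> TT n" and G: "ml n G"
    and low: "\<And>xs i. length xs = n \<Longrightarrow> \<forall>i<n. xs!i \<in> c (Suc (T!i)) \<Longrightarrow> i < n \<Longrightarrow> xs!i \<in> c (T!i) \<Longrightarrow> G xs = 0"
    and z: "G (map e T) = 0"
  shows "length xs = n \<Longrightarrow> \<forall>i<n. xs!i \<in> c (Suc (T!i)) \<Longrightarrow> G xs = 0"
proof -
  have lenT: "length T = n" and TlN: "\<And>i. i < n \<Longrightarrow> T!i < N" using TN by (auto simp: TT_def)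
  have "\<forall>xs. length xs = n \<and> (\<forall>i<n. xs!i \<in> c (Suc (T!i))) \<and> (\<forall>i. j \<le> i \<and> i < n \<longrightarrow> xs!i = e (T!i)) \<longrightarrow> G xs = 0" for j
  proof (induction j)
    case 0
    show ?case
    proof (intro allI impI)
      fix xs assume a: "length xs = n \<and> (\<forall>i<n. xs!i \<in> c (Suc (T!i))) \<and> (\<forall>i. 0 \<le> i \<and> i < n \<longrightarrow> xs!i = e (T!i))"
      then have "xs = map e T" using lenT by (intro nth_equalityI) auto
      then show "G xs = 0" using z by simp
    qed
  next
    case (Suc j)
    show ?case
    proof (intro allI impI)
      fix xs assume a: "length xs = n \<and> (\<forall>i<n. xs!i \<in> c (Suc (T!i))) \<and> (\<forall>i. Suc j \<le> i \<and> i < n \<longrightarrow> xs!i = e (T!i))"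
      show "G xs = 0"
      proof (cases "j < n")
        case False
        then show ?thesis using Suc.IH a by auto
      next
        case True
        obtain k w where w: "w \<in> c (T!j)" and xj: "xs!j = sg k (e (T!j)) + w"
          using c_decomp[OF TlN[OF True]] a True by blast
        have len: "length xs = n" using a by simp
        have b1: "\<forall>i<n. xs[j := e (T!j)] ! i \<in> c (Suc (T!i))"
        proof (intro allI impI)
          fix i assume "i < n"
          then show "xs[j := e (T!j)] ! i \<in> c (Suc (T!i))"
            using a e_in[OF TlN[OF True]] by (cases "i = j") auto
        qed
        have b2: "\<forall>i. j \<le> i \<and> i < n \<longrightarrow> xs[j := e (T!j)] ! i = e (T!i)"
          using a by (auto simp: nth_list_update)
        have "G xs = G (xs[j := sg k (e (T!j)) + w])" using xj by (simp flip: xj)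
        also have "\<dots> = sm k (G (xs[j := e (T!j)])) + G (xs[j := w])"
          using mlD(2)[OF G len True] mlD(3)[OF G len True] by simp
        also have "G (xs[j := e (T!j)]) = 0"
          using Suc.IH b1 b2 len by simp
        also have "G (xs[j := w]) = 0"
        proof (rule low)
          show "length (xs[j := w]) = n" using len by simp
          show "\<forall>i<n. xs[j := w] ! i \<in> c (Suc (T ! i))"
          proof (intro allI impI)
            fix i assume "i < n"
            then show "xs[j := w] ! i \<in> c (Suc (T!i))"
              using a w c_mono[OF TlN[OF True]] len by (cases "i = j") auto
          qed
          show "j < n" by fact
          show "xs[j := w] ! j \<in> c (T ! j)" using w True len by simp
        qed
        finally show ?thesis by simp
      qed
    qed
  qed
  from this[of n] show "length xs = n \<Longrightarrow> \<forall>i<n. xs!i \<in> c (Suc (T!i)) \<Longrightarrow> G xs = 0" by auto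
qed


lemma main_step:
  assumes f: "ml (Suc p) f" and df: "\<And>xs. D (Suc p) f xs = 0"
  shows "card P = k \<Longrightarrow> P \<subseteq> TT (Suc p) \<Longrightarrow> dc (Suc p) P \<Longrightarrow>
         \<exists>h. ml p h \<and> van P (\<lambda>xs. f xs - D p h xs)"
proof (induction k arbitrary: P)
  case 0
  then have "P = {}" using finite_subset[OF _ finite_TT] by auto
  then have "van P (\<lambda>xs. f xs - D p (\<lambda>xs. 0) xs)" by (simp add: van_def)
  then show ?case using ml_zero by blast
next
  case (Suc k)
  define n where "n = Suc p"
  have PT: "P \<subseteq> TT n" and dcP: "dc n P" using Suc.prems by (auto simp: n_def)
  have finP: "finite P" using PT finite_TT finite_subset by blast
  have "P \<noteq> {}" using Suc.prems(1) by auto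
  have fin2: "finite (sum_list ` P)" using finP by simp
  have ne2: "sum_list ` P \<noteq> {}" using \<open>P \<noteq> {}\<close> by simp
  obtain T where T: "T \<in> P" and Ts: "sum_list T = Max (sum_list ` P)"
    using Max_in[OF fin2 ne2] by auto
  have Tmax: "\<forall>T'\<in>P. sum_list T' \<le> sum_list T"
    unfolding Ts using Max_ge[OF fin2] by auto
  define P' where "P' = P - {T}"
  have lenT: "length T = n" and TN: "T \<in> TT n" using T PT by (auto simp: TT_def)
  have cardP': "card P' = k" using Suc.prems(1) T finP by (simp add: P'_def)
  have P'T: "P' \<subseteq> TT n" using PT by (auto simp: P'_def)
  have dcP': "dc n P'" unfolding dc_def
  proof (intro ballI allI impI)
    fix T1 T' assume T1: "T1 \<in> P'" and a: "length T' = n \<and> (\<forall>i<n. T'!i \<le> T1!i)"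
    have "T1 \<in> P" using T1 by (simp add: P'_def)
    then have "T' \<in> P" using dcP a unfolding dc_def by blast
    moreover have "T' \<noteq> T"
    proof
      assume "T' = T"
      have lenT1: "length T1 = n" using T1 P'T by (auto simp: TT_def)
      have "T1 \<noteq> T" using T1 by (auto simp: P'_def)
      then have "sum_list T < sum_list T1" using sum_list_lt[of T T1] a \<open>T' = T\<close> lenT lenT1 by auto
      moreover have "sum_list T1 \<le> sum_list T" using Tmax T1 by (auto simp: P'_def)
      ultimately show False by simp
    qed
    ultimately show "T' \<in> P'" by (simp add: P'_def)
  qed
  obtain h where h: "ml p h" and vh: "van P' (\<lambda>xs. f xs - D p h xs)"
    using Suc.IH[OF cardP'] P'T dcP' by (auto simp: n_def)
  define g where "g = (\<lambda>xs. f xs - D p h xs)"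
  have g: "ml n g" unfolding g_def n_def by (rule ml_diff_fun[OF f ml_D[OF h]])
  have dg: "D n g xs = 0" for xs
    unfolding g_def n_def by (simp add: D_diff df DD[OF h])
  have vg: "van P' g" using vh by (simp add: g_def)
  have lowgen: "\<And>G xs i. ml n G \<Longrightarrow> van P' G \<Longrightarrow> length xs = n \<Longrightarrow> \<forall>i<n. xs!i \<in> c (Suc (T!i)) \<Longrightarrow> i < n \<Longrightarrow> xs!i \<in> c (T!i) \<Longrightarrow> G xs = 0"
    using lower[OF dcP PT T] by (simp add: P'_def)
  define mu where "mu x = (\<Sum>i<n. lam (T!i) x)" for x
  define eT where "eT = map e T"
  have rhoG: "th x G eT = la x (G eT) - sm (mu x) (G eT)" if "ml n G" "van P' G" for G x
    unfolding mu_def eT_def by (rule rho[OF TN that(1)]) (rule lowgen[OF that], auto)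
  define V where "V = {D p h' eT | h'. ml p h' \<and> van P' (D p h')}"
  have VD: "van P' (D p h')" if "ml p h'" "van P' (D p h'')" "h' = th x h''" "ml p h''" for h' h'' x
    unfolding van_def
  proof (intro ballI allI impI)
    fix T1 xs assume T1: "T1 \<in> P'" and b: "box T1 xs"
    have "length xs = Suc p" using b T1 P'T by (auto simp: box_def TT_def n_def)
    then have "D p h' xs = th x (D p h'') xs" using TD[OF that(4)] that(3) by simp
    also have "\<dots> = 0" using van_th[OF that(2) P'T] T1 b by (auto simp: van_def)
    finally show "D p h' xs = 0" .
  qed
  have Vsub: "M.subspace V"
  proof (rule M.subspaceI)
    have "van P' (D p (\<lambda>xs. 0))" unfolding van_def D_zero by simp
    moreover have "(0::'m) = D p (\<lambda>xs. 0) eT" by (simp add: D_zero)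
    ultimately show "0 \<in> V" unfolding V_def using ml_zero by blast
  next
    fix v w assume "v \<in> V" "w \<in> V"
    then obtain h1 h2 where e1: "v = D p h1 eT" and m1: "ml p h1" and v1: "van P' (D p h1)"
      and e2: "w = D p h2 eT" and m2: "ml p h2" and v2: "van P' (D p h2)"
      unfolding V_def by blast
    have "van P' (D p (\<lambda>xs. h1 xs + h2 xs))" using v1 v2 unfolding van_def D_add by simp
    moreover have "ml p (\<lambda>xs. h1 xs + h2 xs)" by (rule ml_add[OF m1 m2])
    moreover have "v + w = D p (\<lambda>xs. h1 xs + h2 xs) eT" using e1 e2 by (simp add: D_add)
    ultimately show "v + w \<in> V" unfolding V_def by blast
  next
    fix a v assume "v \<in> V"
    then obtain h1 where e1: "v = D p h1 eT" and m1: "ml p h1" and v1: "van P' (D p h1)"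
      unfolding V_def by blast
    have "van P' (D p (\<lambda>xs. sm a (h1 xs)))" using v1 unfolding van_def D_scale by simp
    moreover have "ml p (\<lambda>xs. sm a (h1 xs))" by (rule ml_scale[OF m1])
    moreover have "sm a v = D p (\<lambda>xs. sm a (h1 xs)) eT" using e1 by (simp add: D_scale)
    ultimately show "sm a v \<in> V" unfolding V_def by blast
  qed
  have Vstab: "\<forall>x. \<forall>v\<in>V. la x v \<in> V"
  proof (intro allI ballI)
    fix x v assume "v \<in> V"
    then obtain h1 where v: "v = D p h1 eT" and h1: "ml p h1" and v1: "van P' (D p h1)"
      by (auto simp: V_def)
    have G1: "ml n (D p h1)" unfolding n_def by (rule ml_D[OF h1])
    have "th x (D p h1) eT = D p (th x h1) eT"
      by (rule TD[OF h1]) (simp add: eT_def lenT n_def)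
    then have "la x v - sm (mu x) v = D p (th x h1) eT" using rhoG[OF G1 v1, of x] v by simp
    moreover have "D p (th x h1) eT \<in> V" unfolding V_def
      using ml_th[OF h1] VD[OF ml_th[OF h1] v1 refl h1] by blast
    ultimately have "la x v - sm (mu x) v \<in> V" by simp
    moreover have "sm (mu x) v \<in> V" using Vsub \<open>v \<in> V\<close> by (rule M.subspace_scale)
    ultimately have "(la x v - sm (mu x) v) + sm (mu x) v \<in> V" using Vsub by (rule_tac M.subspace_add) auto
    then show "la x v \<in> V" by simp
  qed
  define u where "u = g eT"
  have uV1: "la x u - sm (mu x) u \<in> V" for x
  proof -
    have lenE: "length eT = Suc p" by (simp add: eT_def lenT n_def)
    have "D n g (x # eT) = th x g eT - D p (io x g) eT" unfolding n_def by (rule cartan[OF lenE])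
    then have "th x g eT = D p (io x g) eT" using dg by simp
    moreover have "th x g eT = la x u - sm (mu x) u" unfolding u_def by (rule rhoG[OF g vg])
    moreover have "D p (io x g) eT \<in> V" unfolding V_def
    proof (intro CollectI exI conjI)
      show "ml p (io x g)" using g by (simp add: n_def ml_io)
      show "van P' (D p (io x g))" unfolding van_def
      proof (intro ballI allI impI)
        fix T1 xs assume T1: "T1 \<in> P'" and b: "box T1 xs"
        have "length xs = Suc p" using b T1 P'T by (auto simp: box_def TT_def n_def)
        then have "D n g (x # xs) = th x g xs - D p (io x g) xs" unfolding n_def by (rule cartan)
        then have "D p (io x g) xs = th x g xs" using dg by simp
        also have "\<dots> = 0" using van_th[OF vg P'T] T1 b by (auto simp: van_def)
        finally show "D p (io x g) xs = 0" .
      qed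
    qed simp
    ultimately show ?thesis by simp
  qed
  have uV: "u \<in> V"
  proof (cases "V = UNIV")
    case True then show ?thesis by simp
  next
    case False
    then have V0: "V = {0}" using stable[OF Vsub Vstab] by simp
    then have "\<forall>x. la x u = sm (mu x) u" using uV1 by simp
    then have "\<forall>x. \<exists>a. la x u = sm a u" by blast
    then have "u = 0" using dimM by blast
    then show ?thesis using V0 by simp
  qed
  then obtain h' where h': "ml p h'" and vh': "van P' (D p h')" and uh': "D p h' eT = u"
    by (auto simp: V_def)
  define hs where "hs = (\<lambda>xs. h xs + h' xs)"
  define gs where "gs = (\<lambda>xs. f xs - D p hs xs)"
  have gs_eq: "gs xs = g xs - D p h' xs" for xs
    by (simp add: gs_def hs_def g_def D_add)
  have gsml: "ml n gs" unfolding gs_def n_def by (rule ml_diff_fun[OF f ml_D]) (simp add: hs_def ml_add h h')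
  have vgs: "van P' gs" using vg vh' by (simp add: van_def gs_eq)
  have gsT: "gs eT = 0" using uh' by (simp add: gs_eq u_def)
  have low': "\<And>xs i. length xs = n \<Longrightarrow> \<forall>i<n. xs!i \<in> c (Suc (T!i)) \<Longrightarrow> i < n \<Longrightarrow> xs!i \<in> c (T!i) \<Longrightarrow> gs xs = 0"
    using lowgen[OF gsml vgs] by blast
  have z: "gs (map e T) = 0" using gsT by (simp add: eT_def)
  have boxT: "gs xs = 0" if "box T xs" for xs
    using expand[OF TN gsml low' z] that lenT unfolding box_def by auto
  have "van P gs" unfolding van_def
  proof (intro ballI allI impI)
    fix T1 xs assume "T1 \<in> P" "box T1 xs"
    then show "gs xs = 0" using boxT vgs by (cases "T1 = T") (auto simp: van_def P'_def)
  qed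
  moreover have "ml p hs" by (simp add: hs_def ml_add h h')
  ultimately show ?case unfolding gs_def by blast
qed

theorem main:
  assumes f: "ml (Suc p) f" and df: "\<And>xs. D (Suc p) f xs = 0"
  shows "\<exists>h. ml p h \<and> (\<forall>xs. D p h xs = f xs)"
proof -
  define n where "n = Suc p"
  have dcT: "dc n (TT n)" unfolding dc_def
  proof (intro ballI allI impI)
    fix T T' assume a: "T \<in> TT n" and b: "length T' = n \<and> (\<forall>i<n. T' ! i \<le> T ! i)"
    have "\<forall>i<n. T'!i < N"
    proof (intro allI impI)
      fix i assume i: "i < n"
      then have "T'!i \<le> T!i" using b by blast
      moreover have "T!i < N" using a i by (simp add: TT_def)
      ultimately show "T'!i < N" by simp
    qed
    then show "T' \<in> TT n" using b by (simp add: TT_def)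
  qed
  have "\<exists>h. ml p h \<and> van (TT n) (\<lambda>xs. f xs - D p h xs)"
    by (rule main_step[OF f df, where P="TT n" and k="card (TT n)"]) (use dcT in \<open>simp_all only: n_def order_refl\<close>)
  then obtain h where h: "ml p h" and v: "van (TT n) (\<lambda>xs. f xs - D p h xs)" by blast
  have N0: "0 < N"
  proof (rule ccontr)
    assume "\<not> 0 < N"
    then have "N = 0" by simp
    then have "\<forall>x::'g. x = 0" using c0 cN by auto
    then have "\<forall>x u. la x u = sm 0 u" by (metis la_0' M.scale_zero_left)
    then show False using Mnz dimM by blast
  qed
  define T0 where "T0 = replicate n (N - 1)"
  have T0: "T0 \<in> TT n" using N0 by (simp add: T0_def TT_def)
  have "D p h xs = f xs" for xs
  proof (cases "length xs = n")
    case True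
    have "box T0 xs" using True N0 cN by (simp add: box_def T0_def)
    then show ?thesis using v T0 by (auto simp: van_def)
  next
    case False
    then show ?thesis using mlD(1)[OF f, of xs] by (simp add: leibniz_d_def n_def)
  qed
  then show ?thesis using h by blast
qed

end


lemma LB_from:
  assumes L: "lie_algebra sg br" and B: "leibniz_bimodule sg br sm la ra"
  shows "LB sg br sm la ra"
proof -
  have VG: "vector_space sg" and bl: "bilinear_map sg sg sg br" and alt: "\<forall>x. br x x = 0"
    and jac: "\<forall>x y z. br x (br y z) + br y (br z x) + br z (br x y) = 0"
    using L by (auto simp: lie_algebra_def)
  have VM: "vector_space sm" and bla: "bilinear_map sg sm sm la" and bra: "bilinear_map sm sg sm ra"
    and a1: "\<forall>x y m. la (br x y) m = la x (la y m) - la y (la x m)"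
    and a2: "\<forall>x y m. ra (la x m) y = la x (ra m y) - ra m (br x y)"
    and a3: "\<forall>x y m. ra (ra m x) y = ra m (br x y) - la x (ra m y)"
    using B by (auto simp: leibniz_bimodule_def)
  have br1: "\<And>y. Vector_Spaces.linear sg sg (\<lambda>x. br x y)" and br2: "\<And>x. Vector_Spaces.linear sg sg (\<lambda>y. br x y)"
    using bl by (auto simp: bilinear_map_def)
  have la1: "\<And>y. Vector_Spaces.linear sg sm (\<lambda>x. la x y)" and la2: "\<And>x. Vector_Spaces.linear sm sm (\<lambda>y. la x y)"
    using bla by (auto simp: bilinear_map_def)
  have ra1: "\<And>y. Vector_Spaces.linear sm sm (\<lambda>x. ra x y)" and ra2: "\<And>x. Vector_Spaces.linear sg sm (\<lambda>y. ra x y)"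
    using bra by (auto simp: bilinear_map_def)
  show ?thesis
    unfolding LB_def
    using VG VM alt jac a1 a2 a3
      br1[unfolded Vector_Spaces.linear_iff] br2[unfolded Vector_Spaces.linear_iff]
      la1[unfolded Vector_Spaces.linear_iff] la2[unfolded Vector_Spaces.linear_iff]
      ra1[unfolded Vector_Spaces.linear_iff] ra2[unfolded Vector_Spaces.linear_iff]
    by auto
qed

context LB
begin

lemma cochain_ml: "cochain sg sm n f \<longleftrightarrow> ml n f"
  unfolding cochain_def ml_def Vector_Spaces.linear_iff using VG VM by auto

lemma dichotomy:
  assumes irr: "irreducible_bimodule sm la ra"
  shows "(\<forall>v x. ra v x = 0) \<or> (\<forall>v x. ra v x = - la x v)"
proof -
  define K where "K = {v. \<forall>x. ra v x = 0}"
  have "sub_bimodule sm la ra K"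
    unfolding sub_bimodule_def
  proof (intro conjI allI impI)
    show "M.subspace K"
      by (rule M.subspaceI) (auto simp: K_def ra_add1 ra_sc1)
    fix x v assume "v \<in> K"
    then show "la x v \<in> K" and "ra v x \<in> K" by (auto simp: K_def ax2 ax3)
  qed
  then have "K = {0} \<or> K = UNIV" using irr by (auto simp: irreducible_bimodule_def)
  then show ?thesis
  proof
    assume K0: "K = {0}"
    have "la x v + ra v x \<in> K" for x v
      unfolding K_def by (simp add: ra_add1 ax2 ax3)
    then have "la x v + ra v x = 0" for x v using K0 by auto
    then have "ra v x = - la x v" for x v by (simp add: eq_neg_iff_add_eq_0 add.commute)
    then show ?thesis by blast
  next
    assume "K = UNIV"
    then show ?thesis by (auto simp: K_def)
  qed
qed

lemma stable_irr:
  assumes irr: "irreducible_bimodule sm la ra" and W: "M.subspace W" and st: "\<forall>x. \<forall>v\<in>W. la x v \<in> W"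
  shows "W = {0} \<or> W = UNIV"
proof -
  have "sub_bimodule sm la ra W"
    unfolding sub_bimodule_def
  proof (intro conjI allI impI)
    show "M.subspace W" by fact
    fix x v assume v: "v \<in> W"
    show "la x v \<in> W" using st v by blast
    show "ra v x \<in> W"
      using dichotomy[OF irr] st v M.subspace_neg[OF W] M.subspace_0[OF W] by metis
  qed
  then show ?thesis using irr by (auto simp: irreducible_bimodule_def)
qed

lemma dim_one:
  assumes irr: "irreducible_bimodule sm la ra" and dimne: "M.dim (UNIV :: 'm set) \<noteq> 1"
    and u: "u \<noteq> 0" and ev: "\<forall>x. \<exists>a. la x u = sm a u"
  shows False
proof -
  have st: "\<forall>x. \<forall>v\<in>M.span {u}. la x v \<in> M.span {u}"
  proof (intro allI ballI)
    fix x v assume "v \<in> M.span {u}"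
    then obtain k where v: "v = sm k u" by (auto simp: M.span_singleton)
    obtain a where a: "la x u = sm a u" using ev by blast
    have "la x v = sm (k * a) u" by (simp add: v la_sc2 a)
    then show "la x v \<in> M.span {u}" by (auto simp: M.span_singleton)
  qed
  have "M.span {u} = {0} \<or> M.span {u} = UNIV"
    by (rule stable_irr[OF irr _ st]) simp
  then show False
  proof
    assume "M.span {u} = {0}"
    moreover have "u \<in> M.span {u}" by (rule M.span_base) simp
    ultimately show False using u by simp
  next
    assume "M.span {u} = UNIV"
    then have "M.dim (UNIV :: 'm set) = M.dim {u}" by (metis M.dim_span)
    also have "\<dots> = 1" using u by (simp add: M.dim_eq_card_independent)
    finally show False using dimne by simp
  qed
qed

end

theorem proposition2p7:
  fixes sg :: "'k::field \<Rightarrow> 'g::ab_group_add \<Rightarrow> 'g"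
    and br :: "'g \<Rightarrow> 'g \<Rightarrow> 'g"
    and sm :: "'k \<Rightarrow> 'm::ab_group_add \<Rightarrow> 'm"
    and la :: "'g \<Rightarrow> 'm \<Rightarrow> 'm"
    and ra :: "'m \<Rightarrow> 'g \<Rightarrow> 'm"
  assumes "lie_algebra sg br"
    and "fin_dim sg"
    and "supersolvable sg br"
    and "leibniz_bimodule sg br sm la ra"
    and "fin_dim sm"
    and "irreducible_bimodule sm la ra"
    and "vector_space.dim sm (UNIV :: 'm set) \<noteq> 1"
  shows "(\<forall>n::nat. n \<ge> 1 \<longrightarrow> HL_vanishes sg br sm la ra n) \<and>
         (symmetric_bimodule la ra \<longrightarrow> (\<forall>n::nat. HL_vanishes sg br sm la ra n))"
proof -
  interpret LB sg br sm la ra by (rule LB_from) fact+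
  note irr = assms(6) and dimne = assms(7)
  have Mnz: "\<exists>u::'m. u \<noteq> 0" using irr by (auto simp: irreducible_bimodule_def)
  have dimM: "\<And>u. u \<noteq> 0 \<Longrightarrow> \<not> (\<forall>x. \<exists>a. la x u = sm a u)"
    using dim_one[OF irr dimne] by blast
  obtain B0 where B0: "finite B0" "G.span B0 = UNIV" using assms(2) by (auto simp: fin_dim_def)
  obtain B where B: "B \<subseteq> B0" "G.independent B" "B0 \<subseteq> G.span B"
    using G.maximal_independent_subset[of B0] by blast
  have finB: "finite B" using B(1) B0(1) finite_subset by blast
  have spanB: "G.span B = UNIV"
    using B(3) B0(2) G.span_mono[OF B(3)] G.span_span by auto
  interpret FG: finite_dimensional_vector_space sg B
    by unfold_locales (fact finB, fact B(2), fact spanB)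
  obtain N c where c0: "c 0 = {0}" and cN: "c N = UNIV" and cid: "\<forall>j\<le>N. lie_ideal sg br (c j)"
    and cs: "\<forall>j<N. c j \<subseteq> c (Suc j) \<and> G.dim (c (Suc j)) = G.dim (c j) + 1"
    using assms(3) by (auto simp: supersolvable_def)
  have csub: "G.subspace (c j)" if "j \<le> N" for j using cid that by (auto simp: lie_ideal_def)
  have c_ideal: "br x y \<in> c j" if "j \<le> N" "y \<in> c j" for j x y using cid that by (auto simp: lie_ideal_def)
  have c_mono: "c j \<subseteq> c (Suc j)" if "j < N" for j using cs that by auto
  have ex_e: "\<exists>v. v \<in> c (Suc j) \<and> v \<notin> c j" if "j < N" for j
  proof (rule ccontr)
    assume "\<not> ?thesis"
    then have "c (Suc j) = c j" using c_mono[OF that] by auto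
    then show False using cs that by auto
  qed
  define e where "e j = (SOME v. v \<in> c (Suc j) \<and> v \<notin> c j)" for j
  have e: "e j \<in> c (Suc j)" "e j \<notin> c j" if "j < N" for j
    using someI_ex[OF ex_e[OF that]] unfolding e_def by auto
  have c_decomp: "\<exists>a. \<exists>w\<in>c j. v = sg a (e j) + w" if j: "j < N" and v: "v \<in> c (Suc j)" for j v
  proof -
    have sj: "G.subspace (c j)" and sj1: "G.subspace (c (Suc j))" using csub j by auto
    have sub: "insert (e j) (c j) \<subseteq> c (Suc j)" using e[OF j] c_mono[OF j] by auto
    have spj: "G.span (c j) = c j" using sj G.span_eq_iff by blast
    have spj1: "G.span (c (Suc j)) = c (Suc j)" using sj1 G.span_eq_iff by blast
    have "e j \<notin> G.span (c j)" using e(2)[OF j] spj by metis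
    then have "G.dim (insert (e j) (c j)) = G.dim (c j) + 1" by (simp add: FG.dim_insert)
    also have "\<dots> = G.dim (c (Suc j))" using cs j by auto
    finally have "G.span (insert (e j) (c j)) = G.span (c (Suc j))"
      using FG.dim_eq_span[OF sub] by simp
    then have "v \<in> G.span (insert (e j) (c j))" using v spj1 by metis
    then obtain k where "v - sg k (e j) \<in> G.span (c j)" by (auto simp: G.span_breakdown_eq)
    then have "v - sg k (e j) \<in> c j" using spj by metis
    then show ?thesis by (intro exI[of _ k] bexI[of _ "v - sg k (e j)"]) auto
  qed
  define lam where "lam j x = (SOME a. \<exists>w\<in>c j. br x (e j) = sg a (e j) + w)" for j x
  have lam_prop: "\<exists>w\<in>c j. br x (e j) = sg (lam j x) (e j) + w" if j: "j < N" for j x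
  proof -
    have "br x (e j) \<in> c (Suc j)" using c_ideal[of "Suc j" "e j" x] e[OF j] j by simp
    from c_decomp[OF j this] show ?thesis unfolding lam_def by (rule someI_ex)
  qed
  have stable: "\<And>W. M.subspace W \<Longrightarrow> (\<forall>x. \<forall>v\<in>W. la x v \<in> W) \<Longrightarrow> W = {0} \<or> W = UNIV"
    using stable_irr[OF irr] by blast
  interpret L2: LB2 sg br sm la ra N c e lam
    by unfold_locales (use c0 cN c_ideal c_mono e c_decomp lam_prop stable dimM Mnz in auto)
  have part1: "HL_vanishes sg br sm la ra n" if n: "n \<ge> 1" for n
    unfolding HL_vanishes_def
  proof (intro allI impI)
    fix f assume a: "cochain sg sm n f \<and> leibniz_d sm br la ra n f = (\<lambda>_. 0)"
    obtain p where np: "n = Suc p" using n by (cases n) auto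
    have f: "ml (Suc p) f" using a np cochain_ml by simp
    have df: "\<And>xs. D (Suc p) f xs = 0" using a np by simp
    obtain h where h: "ml p h" and dh: "\<forall>xs. D p h xs = f xs" using L2.main[OF f df] by blast
    have "cochain sg sm (n - 1) h" using h np cochain_ml by simp
    moreover have "leibniz_d sm br la ra (n - 1) h = f" using dh np by (simp add: fun_eq_iff)
    ultimately show "if n = 0 then f = (\<lambda>_. 0) else (\<exists>h. cochain sg sm (n - 1) h \<and> leibniz_d sm br la ra (n - 1) h = f)"
      using np by auto
  qed
  have part2: "HL_vanishes sg br sm la ra n" if sym: "symmetric_bimodule la ra" for n
  proof (cases "n \<ge> 1")
    case True then show ?thesis by (rule part1)
  next
    case False
    then have n0: "n = 0" by simp
    show ?thesis unfolding HL_vanishes_def n0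
    proof (intro allI impI)
      fix f assume a: "cochain sg sm 0 f \<and> leibniz_d sm br la ra 0 f = (\<lambda>_. 0)"
      have f: "ml 0 f" using a cochain_ml by simp
      have "D 0 f [x] = 0" for x using a by simp
      then have "ra (f []) x = 0" for x by (simp add: D0)
      then have "la x (f []) = sm 0 (f [])" for x using sym by (simp add: symmetric_bimodule_def)
      then have "f [] = 0" using dimM by blast
      then have "f xs = 0" for xs using mlD(1)[OF f, of xs] by (cases xs) auto
      then show "if (0::nat) = 0 then f = (\<lambda>_. 0) else (\<exists>h. cochain sg sm (0 - 1) h \<and> leibniz_d sm br la ra (0 - 1) h = f)"
        by (simp add: fun_eq_iff)
    qed
  qed
  show ?thesis using part1 part2 by blast
qed

end
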